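(* Let $\mathbf{H}_1,\ldots,\mathbf{H}_Q$ be full-column-rank matrices with $\mathbf{H}_q\in\mathbb{R}^{N\times K_q}$, and let $\pi_1,\ldots,\pi_Q\ge0$ with $\sum_q\pi_q=1$. Let $\mathbf{H}_{\mathrm{eq}}=\sum_{q=1}^Q\pi_q\mathbf{H}_q\mathbf{H}_q^T$, with orthonormal eigenvectors $\mathbf{e}_1,\ldots,\mathbf{e}_N$ and corresponding eigenvalues $\mu_1\ge\cdots\ge\mu_N$. Let $M_1,M_2$ be positive integers with $M=M_1+M_2\le N$. Under the model in the context, $\boldsymbol{\Phi}_s=\frac{1}{\sqrt M}[\mathbf{e}_1,\ldots,\mathbf{e}_{M_1}]^T$ maximizes $\mathbb{E}_{\mathbf{H},\mathbf{x},\mathbf{w}}(\mathbf{z}_s^T\mathbf{z}_s)$ over all $\boldsymbol{\Phi}_s\in\mathbb{R}^{M_1\times N}$ with $M\boldsymbol{\Phi}_s\boldsymbol{\Phi}_s^T=\mathbf{I}_{M_1}$, and $\boldsymbol{\Phi}_o=\frac{1}{\sqrt M}[\mathbf{e}_{N-M_2+1},\ldots,\mathbf{e}_N]^T$ minimizes $\mathbb{E}_{\mathbf{H},\mathbf{x},\mathbf{w}}(\mathbf{z}_o^T\mathbf{z}_o)$ over all $\boldsymbol{\Phi}_o\in\mathbb{R}^{M_2\times N}$ with $M\boldsymbol{\Phi}_o\boldsymbol{\Phi}_o^T=\mathbf{I}_{M_2}$.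
   Context: The subspace matrix $\mathbf{H}$ is random with $\Pr(\mathbf{H}=\mathbf{H}_q)=\pi_q$. Given $\mathbf{H}=\mathbf{H}_q$, the signal is $\mathbf{s}=\mathbf{H}_q\mathbf{x}$ with $\mathbf{x}\sim\mathcal{N}(\mathbf{0}_{K_q,1},\sigma_x^2\mathbf{I}_{K_q})$. Rows $\boldsymbol{\phi}_m^T$ of a measurement matrix represent measurement devices; device $m$ outputs $z_m=\boldsymbol{\phi}_m^T(\mathbf{s}+\mathbf{w}_m)$, with $\mathbf{w}_m\sim\mathcal{N}(\mathbf{0}_{N,1},\sigma_0^2\mathbf{I}_N)$ mutually independent and independent of $\mathbf{x}$ and $\mathbf{H}$. $\mathbf{z}_s$ (resp. $\mathbf{z}_o$) is the vector of outputs of the devices given by the rows of $\boldsymbol{\Phi}_s$ (resp. $\boldsymbol{\Phi}_o$). Expectation is over $\mathbf{H}$, $\mathbf{x}$ and the noise. *)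

theory Defs
  imports "HOL-Probability.Probability" "Jordan_Normal_Form.Matrix" "Jordan_Normal_Form.DL_Rank"
begin

definition full_col_rank :: "real mat \<Rightarrow> bool" where
  "full_col_rank A \<longleftrightarrow> vec_space.rank (dim_row A) A = dim_col A"

definition gauss :: "real \<Rightarrow> real measure" where
  "gauss \<sigma> = density lborel (normal_density 0 \<sigma>)"

definition x_law :: "real \<Rightarrow> nat \<Rightarrow> (nat \<Rightarrow> real) measure" where
  "x_law \<sigma>x K = PiM {..<K} (\<lambda>_. gauss \<sigma>x)"

text \<open>Law of the noise of the devices: w (m,n) is the n-th entry of w_m,
  all i.i.d. N(0,sigma_0^2), for m < number of devices, n < N.\<close>
definition w_law :: "real \<Rightarrow> nat \<Rightarrow> nat \<Rightarrow> (nat \<times> nat \<Rightarrow> real) measure" where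
  "w_law \<sigma>0 Mr N = PiM ({..<Mr} \<times> {..<N}) (\<lambda>_. gauss \<sigma>0)"

text \<open>Output energy z^T z of the devices given by the rows of Phi, for a realisation
  H = H_q, x, noise w: z_m = phi_m^T (H_q x + w_m).\<close>
definition out_energy :: "real mat \<Rightarrow> real mat \<Rightarrow> nat \<Rightarrow> (nat \<Rightarrow> real) \<Rightarrow> (nat \<times> nat \<Rightarrow> real) \<Rightarrow> real" where
  "out_energy \<Phi> Hq N x w =
     (\<Sum>m<dim_row \<Phi>. (row \<Phi> m \<bullet> (Hq *\<^sub>v vec (dim_col Hq) x + vec N (\<lambda>n. w (m, n))))\<^sup>2)"

text \<open>Expectation E_{H,x,w}(z^T z): H = H q with probability pi q (q < Q), then x and
  the noise are independent Gaussians as in the model.\<close>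
definition expected_energy ::
  "real \<Rightarrow> real \<Rightarrow> nat \<Rightarrow> (nat \<Rightarrow> real) \<Rightarrow> (nat \<Rightarrow> real mat) \<Rightarrow> nat \<Rightarrow> real mat \<Rightarrow> real" where
  "expected_energy \<sigma>x \<sigma>0 Q \<pi> H N \<Phi> =
     (\<Sum>q<Q. \<pi> q * (\<integral>x. (\<integral>w. out_energy \<Phi> (H q) N x w \<partial>w_law \<sigma>0 (dim_row \<Phi>) N)
                        \<partial>x_law \<sigma>x (dim_col (H q))))"

end

theory Submission
  imports Defs
begin


lemma gauss_prob: "\<sigma> > 0 \<Longrightarrow> prob_space (gauss \<sigma>)"
  unfolding gauss_def by (rule prob_space_normal_density)

lemma gauss_prod: "\<sigma> > 0 \<Longrightarrow> product_prob_space (\<lambda>_. gauss \<sigma>)"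
  by (simp add: product_prob_space_def product_prob_space_axioms_def product_sigma_finite_def
      gauss_prob prob_space_imp_sigma_finite)

lemma gauss_int1: assumes "\<sigma> > 0"
  shows "integrable (gauss \<sigma>) (\<lambda>t. t)" "(\<integral>t. t \<partial>gauss \<sigma>) = 0"
proof -
  have i: "integrable lborel (\<lambda>x. normal_density 0 \<sigma> x * x)"
    using integrable_normal_moment_nz_1[OF assms] .
  show "integrable (gauss \<sigma>) (\<lambda>t. t)" unfolding gauss_def
    by (subst integrable_density) (auto simp: i)
  show "(\<integral>t. t \<partial>gauss \<sigma>) = 0" unfolding gauss_def
    by (subst integral_density) (auto simp: integral_normal_moment_nz_1[OF assms])
qed

lemma gauss_int2: assumes "\<sigma> > 0"
  shows "integrable (gauss \<sigma>) (\<lambda>t. t * t)" "(\<integral>t. t * t \<partial>gauss \<sigma>) = \<sigma>\<^sup>2"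
proof -
  have h: "has_bochner_integral lborel (\<lambda>x. normal_density 0 \<sigma> x * (x - 0) ^ (2 * 1)) (fact (2 * 1) / ((2 / \<sigma>\<^sup>2)^1 * fact 1))"
    by (rule normal_moment_even[OF assms])
  have e: "(\<lambda>x. normal_density 0 \<sigma> x * (x - 0) ^ (2 * 1)) = (\<lambda>x. normal_density 0 \<sigma> x * (x * x))"
    by (auto simp: power2_eq_square)
  have v: "(fact (2 * 1) / ((2 / \<sigma>\<^sup>2)^1 * fact 1)) = (\<sigma>\<^sup>2::real)"
    using assms by (simp add: fact_numeral)
  have h2: "has_bochner_integral lborel (\<lambda>x. normal_density 0 \<sigma> x * (x * x)) (\<sigma>\<^sup>2)"
    using h unfolding e v .
  show "integrable (gauss \<sigma>) (\<lambda>t. t * t)" unfolding gauss_def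
    by (subst integrable_density) (auto intro: integrable.intros[OF h2])
  show "(\<integral>t. t * t \<partial>gauss \<sigma>) = \<sigma>\<^sup>2" unfolding gauss_def
    by (subst integral_density) (use h2 in \<open>auto dest: has_bochner_integral_integral_eq\<close>)
qed

abbreviation "GP I \<sigma> \<equiv> PiM I (\<lambda>_::'i. gauss \<sigma>)"

lemma gp_prob: "\<sigma> > 0 \<Longrightarrow> prob_space (GP I \<sigma>)"
  by (intro prob_space_PiM gauss_prob)

lemma gauss_int0: "\<sigma> > 0 \<Longrightarrow> integrable (gauss \<sigma>) (\<lambda>t. 1::real)"
     "\<sigma> > 0 \<Longrightarrow> (\<integral>t. 1 \<partial>gauss \<sigma>) = (1::real)"
proof -
  assume "\<sigma> > 0"
  then interpret prob_space "gauss \<sigma>" by (rule gauss_prob)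
  show "integrable (gauss \<sigma>) (\<lambda>t. 1::real)" by simp
  show "(\<integral>t. 1 \<partial>gauss \<sigma>) = (1::real)" by (simp add: prob_space)
qed

lemma gp_x1:
  assumes "finite I" "a \<in> I" "\<sigma> > 0"
  shows "integrable (GP I \<sigma>) (\<lambda>x. x a)" "(\<integral>x. x a \<partial>GP I \<sigma>) = 0"
proof -
  interpret product_prob_space "\<lambda>_. gauss \<sigma>" by (rule gauss_prod[OF assms(3)])
  define f where "f i t = (if i = a then t else (1::real))" for i t
  have fi: "integrable (gauss \<sigma>) (f i)" if "i \<in> I" for i
    using gauss_int1[OF assms(3)] gauss_int0[OF assms(3)] by (cases "i = a") (simp_all add: f_def[abs_def])
  have e: "(\<lambda>x. \<Prod>i\<in>I. f i (x i)) = (\<lambda>x. x a)"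
    using assms by (auto simp: f_def prod.delta fun_eq_iff)
  show "integrable (GP I \<sigma>) (\<lambda>x. x a)"
    using product_integrable_prod[OF assms(1), of f] fi unfolding e by blast
  have "(\<integral>x. (\<Prod>i\<in>I. f i (x i)) \<partial>GP I \<sigma>) = (\<Prod>i\<in>I. integral\<^sup>L (gauss \<sigma>) (f i))"
    by (rule product_integral_prod[OF assms(1)]) (rule fi)
  also have "\<dots> = 0"
    using assms gauss_int1[OF assms(3)] by (auto simp: f_def[abs_def] prod_zero_iff intro!: bexI[of _ a])
  finally show "(\<integral>x. x a \<partial>GP I \<sigma>) = 0" unfolding e .
qed

lemma gp_x2:
  assumes "finite I" "a \<in> I" "b \<in> I" "\<sigma> > 0"
  shows "integrable (GP I \<sigma>) (\<lambda>x. x a * x b)"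
        "(\<integral>x. x a * x b \<partial>GP I \<sigma>) = (if a = b then \<sigma>\<^sup>2 else 0)"
proof -
  interpret product_prob_space "\<lambda>_. gauss \<sigma>" by (rule gauss_prod[OF assms(4)])
  have "integrable (GP I \<sigma>) (\<lambda>x. x a * x b) \<and> (\<integral>x. x a * x b \<partial>GP I \<sigma>) = (if a = b then \<sigma>\<^sup>2 else 0)"
  proof (cases "a = b")
    case True
    define f where "f i t = (if i = a then t * t else (1::real))" for i t
    have fi: "integrable (gauss \<sigma>) (f i)" if "i \<in> I" for i
      using gauss_int2[OF assms(4)] gauss_int0[OF assms(4)] by (cases "i = a") (simp_all add: f_def[abs_def])
    have e: "(\<lambda>x. \<Prod>i\<in>I. f i (x i)) = (\<lambda>x. x a * x b)"
      using assms True by (auto simp: f_def prod.delta fun_eq_iff)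
    have "(\<integral>x. (\<Prod>i\<in>I. f i (x i)) \<partial>GP I \<sigma>) = (\<Prod>i\<in>I. integral\<^sup>L (gauss \<sigma>) (f i))"
      by (rule product_integral_prod[OF assms(1)]) (rule fi)
    also have "\<dots> = (\<Prod>i\<in>I. if i = a then \<sigma>\<^sup>2 else 1)"
      using gauss_int2[OF assms(4)] gauss_int0[OF assms(4)] by (intro prod.cong) (auto simp: f_def[abs_def])
    also have "\<dots> = \<sigma>\<^sup>2" using assms by (simp add: prod.delta)
    finally show ?thesis using product_integrable_prod[OF assms(1), of f] fi True unfolding e by simp
  next
    case False
    define f where "f i t = (if i = a then t else if i = b then t else (1::real))" for i t
    have fi: "integrable (gauss \<sigma>) (f i)" if "i \<in> I" for i
      using gauss_int1[OF assms(4)] gauss_int0[OF assms(4)] by (cases "i = a"; cases "i = b") (simp_all add: f_def[abs_def])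
    have e: "(\<lambda>x. \<Prod>i\<in>I. f i (x i)) = (\<lambda>x. x a * x b)"
    proof
      fix x
      have "(\<Prod>i\<in>I. f i (x i)) = f a (x a) * (\<Prod>i\<in>I-{a}. f i (x i))"
        using assms by (simp add: prod.remove)
      also have "(\<Prod>i\<in>I-{a}. f i (x i)) = f b (x b) * (\<Prod>i\<in>I-{a}-{b}. f i (x i))"
        using assms False by (subst prod.remove[of _ b]) auto
      also have "(\<Prod>i\<in>I-{a}-{b}. f i (x i)) = 1"
        by (rule prod.neutral) (auto simp: f_def)
      finally show "(\<Prod>i\<in>I. f i (x i)) = x a * x b" using False by (simp add: f_def)
    qed
    have "(\<integral>x. (\<Prod>i\<in>I. f i (x i)) \<partial>GP I \<sigma>) = (\<Prod>i\<in>I. integral\<^sup>L (gauss \<sigma>) (f i))"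
      by (rule product_integral_prod[OF assms(1)]) (rule fi)
    also have "\<dots> = 0"
      using assms gauss_int1[OF assms(4)] by (auto simp: f_def[abs_def] prod_zero_iff intro!: bexI[of _ a])
    finally show ?thesis using product_integrable_prod[OF assms(1), of f] fi False unfolding e by simp
  qed
  then show "integrable (GP I \<sigma>) (\<lambda>x. x a * x b)"
        "(\<integral>x. x a * x b \<partial>GP I \<sigma>) = (if a = b then \<sigma>\<^sup>2 else 0)" by auto
qed

lemma gp_quad:
  assumes "finite I" "J \<subseteq> I" "\<sigma> > 0"
  shows "integrable (GP I \<sigma>) (\<lambda>x. (c + (\<Sum>j\<in>J. b j * x j))\<^sup>2)"
        "(\<integral>x. (c + (\<Sum>j\<in>J. b j * x j))\<^sup>2 \<partial>GP I \<sigma>) = c\<^sup>2 + \<sigma>\<^sup>2 * (\<Sum>j\<in>J. (b j)\<^sup>2)"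
proof -
  interpret P: prob_space "GP I \<sigma>" by (rule gp_prob[OF assms(3)])
  have fJ: "finite J" using assms finite_subset by blast
  have e: "(\<lambda>x. (c + (\<Sum>j\<in>J. b j * x j))\<^sup>2) = (\<lambda>x. c\<^sup>2 + (\<Sum>j\<in>J. (2 * c * b j) * x j)
     + (\<Sum>j\<in>J. \<Sum>k\<in>J. (b j * b k) * (x j * x k)))"
  proof
    fix x
    have "(c + (\<Sum>j\<in>J. b j * x j))\<^sup>2 = c\<^sup>2 + 2 * c * (\<Sum>j\<in>J. b j * x j) + (\<Sum>j\<in>J. b j * x j) * (\<Sum>j\<in>J. b j * x j)"
      by (simp add: power2_eq_square algebra_simps)
    also have "2 * c * (\<Sum>j\<in>J. b j * x j) = (\<Sum>j\<in>J. (2 * c * b j) * x j)"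
      by (simp add: sum_distrib_left mult.assoc)
    also have "(\<Sum>j\<in>J. b j * x j) * (\<Sum>j\<in>J. b j * x j) = (\<Sum>j\<in>J. \<Sum>k\<in>J. (b j * x j) * (b k * x k))"
      by (rule sum_product)
    also have "\<dots> = (\<Sum>j\<in>J. \<Sum>k\<in>J. (b j * b k) * (x j * x k))"
      by (simp add: mult_ac)
    finally show "(c + (\<Sum>j\<in>J. b j * x j))\<^sup>2 = c\<^sup>2 + (\<Sum>j\<in>J. (2 * c * b j) * x j)
     + (\<Sum>j\<in>J. \<Sum>k\<in>J. (b j * b k) * (x j * x k))" .
  qed
  have i1: "integrable (GP I \<sigma>) (\<lambda>x. x j)" if "j \<in> J" for j
    using gp_x1(1)[OF assms(1) _ assms(3), of j] assms(2) that by blast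
  have i2: "integrable (GP I \<sigma>) (\<lambda>x. x j * x k)" if "j \<in> J" "k \<in> J" for j k
    using gp_x2(1)[OF assms(1) _ _ assms(3), of j k] assms(2) that by blast
  have int: "integrable (GP I \<sigma>) (\<lambda>x. c\<^sup>2 + (\<Sum>j\<in>J. (2 * c * b j) * x j)
     + (\<Sum>j\<in>J. \<Sum>k\<in>J. (b j * b k) * (x j * x k)))"
    using i1 i2 by (intro Bochner_Integration.integrable_add Bochner_Integration.integrable_sum
        integrable_mult_right P.integrable_const) auto
  then show "integrable (GP I \<sigma>) (\<lambda>x. (c + (\<Sum>j\<in>J. b j * x j))\<^sup>2)" unfolding e .
  have "(\<integral>x. c\<^sup>2 + (\<Sum>j\<in>J. (2 * c * b j) * x j)
     + (\<Sum>j\<in>J. \<Sum>k\<in>J. (b j * b k) * (x j * x k)) \<partial>GP I \<sigma>)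
     = c\<^sup>2 + (\<Sum>j\<in>J. (2 * c * b j) * (\<integral>x. x j \<partial>GP I \<sigma>))
       + (\<Sum>j\<in>J. \<Sum>k\<in>J. (b j * b k) * (\<integral>x. x j * x k \<partial>GP I \<sigma>))"
  proof -
    have iB: "integrable (GP I \<sigma>) (\<lambda>x. \<Sum>j\<in>J. (2 * c * b j) * x j)"
      using i1 by (intro Bochner_Integration.integrable_sum integrable_mult_right) auto
    have iC: "integrable (GP I \<sigma>) (\<lambda>x. \<Sum>j\<in>J. \<Sum>k\<in>J. (b j * b k) * (x j * x k))"
      using i2 by (intro Bochner_Integration.integrable_sum integrable_mult_right) auto
    have iA: "integrable (GP I \<sigma>) (\<lambda>x. c\<^sup>2)" by (rule P.integrable_const)
    have iAB: "integrable (GP I \<sigma>) (\<lambda>x. c\<^sup>2 + (\<Sum>j\<in>J. (2 * c * b j) * x j))"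
      using iA iB by (rule Bochner_Integration.integrable_add)
    have "(\<integral>x. c\<^sup>2 + (\<Sum>j\<in>J. (2 * c * b j) * x j)
     + (\<Sum>j\<in>J. \<Sum>k\<in>J. (b j * b k) * (x j * x k)) \<partial>GP I \<sigma>) =
      (\<integral>x. c\<^sup>2 + (\<Sum>j\<in>J. (2 * c * b j) * x j) \<partial>GP I \<sigma>) +
      (\<integral>x. (\<Sum>j\<in>J. \<Sum>k\<in>J. (b j * b k) * (x j * x k)) \<partial>GP I \<sigma>)"
      by (rule Bochner_Integration.integral_add[OF iAB iC])
    also have "(\<integral>x. c\<^sup>2 + (\<Sum>j\<in>J. (2 * c * b j) * x j) \<partial>GP I \<sigma>) =
      (\<integral>x. c\<^sup>2 \<partial>GP I \<sigma>) + (\<integral>x. (\<Sum>j\<in>J. (2 * c * b j) * x j) \<partial>GP I \<sigma>)"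
      by (rule Bochner_Integration.integral_add[OF iA iB])
    also have "(\<integral>x. c\<^sup>2 \<partial>GP I \<sigma>) = c\<^sup>2" by (simp add: P.prob_space)
    also have "(\<integral>x. (\<Sum>j\<in>J. (2 * c * b j) * x j) \<partial>GP I \<sigma>) =
       (\<Sum>j\<in>J. (\<integral>x. (2 * c * b j) * x j \<partial>GP I \<sigma>))"
      using i1 by (intro Bochner_Integration.integral_sum integrable_mult_right) auto
    also have "\<dots> = (\<Sum>j\<in>J. (2 * c * b j) * (\<integral>x. x j \<partial>GP I \<sigma>))"
      by (intro sum.cong refl integral_mult_right_zero)
    also have "(\<integral>x. (\<Sum>j\<in>J. \<Sum>k\<in>J. (b j * b k) * (x j * x k)) \<partial>GP I \<sigma>) =
       (\<Sum>j\<in>J. (\<integral>x. (\<Sum>k\<in>J. (b j * b k) * (x j * x k)) \<partial>GP I \<sigma>))"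
      using i2 by (intro Bochner_Integration.integral_sum Bochner_Integration.integrable_sum integrable_mult_right) auto
    also have "\<dots> = (\<Sum>j\<in>J. \<Sum>k\<in>J. (\<integral>x. (b j * b k) * (x j * x k) \<partial>GP I \<sigma>))"
      using i2 by (intro sum.cong refl Bochner_Integration.integral_sum integrable_mult_right) auto
    also have "\<dots> = (\<Sum>j\<in>J. \<Sum>k\<in>J. (b j * b k) * (\<integral>x. x j * x k \<partial>GP I \<sigma>))"
      by (intro sum.cong refl integral_mult_right_zero)
    finally show ?thesis .
  qed
  also have "\<dots> = c\<^sup>2 + (\<Sum>j\<in>J. \<Sum>k\<in>J. (b j * b k) * (if j = k then \<sigma>\<^sup>2 else 0))"
  proof -
    have "j \<in> J \<Longrightarrow> (\<integral>x. x j \<partial>GP I \<sigma>) = 0" for j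
      using gp_x1(2)[OF assms(1) _ assms(3), of j] assms(2) by blast
    moreover have "j \<in> J \<Longrightarrow> k \<in> J \<Longrightarrow> (\<integral>x. x j * x k \<partial>GP I \<sigma>) = (if j = k then \<sigma>\<^sup>2 else 0)" for j k
      using gp_x2(2)[OF assms(1) _ _ assms(3), of j k] assms(2) by blast
    ultimately show ?thesis by (auto intro!: sum.cong)
  qed
  also have "\<dots> = c\<^sup>2 + \<sigma>\<^sup>2 * (\<Sum>j\<in>J. (b j)\<^sup>2)"
    using fJ by (simp add: if_distrib sum.delta sum_distrib_left power2_eq_square mult_ac cong: if_cong)
  finally show "(\<integral>x. (c + (\<Sum>j\<in>J. b j * x j))\<^sup>2 \<partial>GP I \<sigma>) = c\<^sup>2 + \<sigma>\<^sup>2 * (\<Sum>j\<in>J. (b j)\<^sup>2)"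
    unfolding e .
qed



lemma sum_single_pair: "(\<Sum>j\<in>{m}\<times>A. f j) = (\<Sum>n\<in>A. f (m, n))"
proof -
  have "{m}\<times>A = Pair m ` A" by auto
  then show ?thesis by (simp add: sum.reindex inj_on_def)
qed

lemma row_term:
  fixes \<Phi> Hq :: "real mat"
  assumes P: "\<Phi> \<in> carrier_mat R N" and Hq: "Hq \<in> carrier_mat N K" and m: "m < R"
  shows "row \<Phi> m \<bullet> (Hq *\<^sub>v vec (dim_col Hq) x + vec N (\<lambda>n. w (m, n))) =
     (\<Sum>k<K. (\<Sum>n<N. \<Phi> $$ (m,n) * Hq $$ (n,k)) * x k) + (\<Sum>j\<in>{m}\<times>{..<N}. \<Phi> $$ (fst j, snd j) * w j)"
proof -
  have dK: "dim_col Hq = K" "dim_row Hq = N" using Hq by auto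
  have "row \<Phi> m \<bullet> (Hq *\<^sub>v vec (dim_col Hq) x + vec N (\<lambda>n. w (m, n))) =
     (\<Sum>n<N. \<Phi> $$ (m,n) * ((\<Sum>k<K. Hq $$ (n,k) * x k) + w (m,n)))"
    unfolding scalar_prod_def using P Hq m
    by (auto simp: dK atLeast0LessThan scalar_prod_def intro!: sum.cong)
  also have "\<dots> = (\<Sum>n<N. \<Sum>k<K. \<Phi> $$ (m,n) * Hq $$ (n,k) * x k) + (\<Sum>n<N. \<Phi> $$ (m,n) * w (m,n))"
    by (simp add: distrib_left sum.distrib sum_distrib_left mult.assoc)
  also have "(\<Sum>n<N. \<Sum>k<K. \<Phi> $$ (m,n) * Hq $$ (n,k) * x k) = (\<Sum>k<K. (\<Sum>n<N. \<Phi> $$ (m,n) * Hq $$ (n,k)) * x k)"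
    by (subst sum.swap) (simp add: sum_distrib_right)
  also have "(\<Sum>n<N. \<Phi> $$ (m,n) * w (m,n)) = (\<Sum>j\<in>{m}\<times>{..<N}. \<Phi> $$ (fst j, snd j) * w j)"
    by (simp add: sum_single_pair)
  finally show ?thesis .
qed

lemma energy_q:
  fixes \<Phi> Hq :: "real mat"
  assumes P: "\<Phi> \<in> carrier_mat R N" and Hq: "Hq \<in> carrier_mat N K" and sx: "\<sigma>x > 0" and s0: "\<sigma>0 > 0"
  shows "(\<integral>x. (\<integral>w. out_energy \<Phi> Hq N x w \<partial>w_law \<sigma>0 R N) \<partial>x_law \<sigma>x K) =
    (\<Sum>m<R. \<sigma>x\<^sup>2 * (\<Sum>k<K. (\<Sum>n<N. \<Phi> $$ (m,n) * Hq $$ (n,k))\<^sup>2) + \<sigma>0\<^sup>2 * (\<Sum>n<N. (\<Phi> $$ (m,n))\<^sup>2))"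
proof -
  define cf where "cf m k = (\<Sum>n<N. \<Phi> $$ (m,n) * Hq $$ (n,k))" for m k
  define a where "a m x = (\<Sum>k\<in>{..<K}. cf m k * x k)" for m and x :: "nat \<Rightarrow> real"
  define b where "b j = \<Phi> $$ (fst j, snd j)" for j
  have oe: "out_energy \<Phi> Hq N x w = (\<Sum>m<R. (a m x + (\<Sum>j\<in>{m}\<times>{..<N}. b j * w j))\<^sup>2)" for x w
    unfolding out_energy_def using P row_term[OF P Hq] by (simp add: a_def b_def cf_def)
  have inner: "(\<integral>w. out_energy \<Phi> Hq N x w \<partial>w_law \<sigma>0 R N) =
      (\<Sum>m<R. (a m x)\<^sup>2 + \<sigma>0\<^sup>2 * (\<Sum>n<N. (\<Phi> $$ (m,n))\<^sup>2))" for x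
  proof -
    have sub: "m < R \<Longrightarrow> {m}\<times>{..<N} \<subseteq> {..<R}\<times>{..<N}" for m by auto
    have "(\<integral>w. out_energy \<Phi> Hq N x w \<partial>w_law \<sigma>0 R N) =
       (\<Sum>m<R. (\<integral>w. (a m x + (\<Sum>j\<in>{m}\<times>{..<N}. b j * w j))\<^sup>2 \<partial>GP ({..<R}\<times>{..<N}) \<sigma>0))"
      unfolding oe w_law_def
      by (rule Bochner_Integration.integral_sum) (rule gp_quad(1)[OF _ sub s0]; auto)
    also have "\<dots> = (\<Sum>m<R. (a m x)\<^sup>2 + \<sigma>0\<^sup>2 * (\<Sum>n<N. (\<Phi> $$ (m,n))\<^sup>2))"
      by (intro sum.cong refl, subst gp_quad(2)[OF _ sub s0]) (auto simp: sum_single_pair b_def)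
    finally show ?thesis .
  qed
  interpret PX: prob_space "GP {..<K} \<sigma>x" by (rule gp_prob[OF sx])
  have ia: "integrable (GP {..<K} \<sigma>x) (\<lambda>x. (a m x)\<^sup>2)" for m
    using gp_quad(1)[of "{..<K}" "{..<K}" \<sigma>x 0 "cf m"] sx by (simp add: a_def)
  have ea: "(\<integral>x. (a m x)\<^sup>2 \<partial>GP {..<K} \<sigma>x) = \<sigma>x\<^sup>2 * (\<Sum>k<K. (cf m k)\<^sup>2)" for m
    using gp_quad(2)[of "{..<K}" "{..<K}" \<sigma>x 0 "cf m"] sx by (simp add: a_def)
  have "(\<integral>x. (\<integral>w. out_energy \<Phi> Hq N x w \<partial>w_law \<sigma>0 R N) \<partial>x_law \<sigma>x K) =
     (\<integral>x. (\<Sum>m<R. (a m x)\<^sup>2 + \<sigma>0\<^sup>2 * (\<Sum>n<N. (\<Phi> $$ (m,n))\<^sup>2)) \<partial>GP {..<K} \<sigma>x)"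
    unfolding x_law_def inner ..
  also have "\<dots> = (\<Sum>m<R. (\<integral>x. (a m x)\<^sup>2 + \<sigma>0\<^sup>2 * (\<Sum>n<N. (\<Phi> $$ (m,n))\<^sup>2) \<partial>GP {..<K} \<sigma>x))"
    using ia by (intro Bochner_Integration.integral_sum Bochner_Integration.integrable_add PX.integrable_const)
  also have "\<dots> = (\<Sum>m<R. \<sigma>x\<^sup>2 * (\<Sum>k<K. (cf m k)\<^sup>2) + \<sigma>0\<^sup>2 * (\<Sum>n<N. (\<Phi> $$ (m,n))\<^sup>2))"
    using ia ea by (intro sum.cong refl) (simp add: Bochner_Integration.integral_add PX.integrable_const PX.prob_space)
  finally show ?thesis by (simp add: cf_def)
qed



lemma expand_row:
  fixes p :: "nat \<Rightarrow> real" and E :: "nat \<Rightarrow> nat \<Rightarrow> real"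
  assumes compl: "\<And>i n. i<N \<Longrightarrow> n<N \<Longrightarrow> (\<Sum>l<N. E l i * E l n) = (if i=n then 1 else 0)"
    and i: "i < N"
  shows "(\<Sum>l<N. (\<Sum>n<N. p n * E l n) * E l i) = p i"
proof -
  have "(\<Sum>l<N. (\<Sum>n<N. p n * E l n) * E l i) = (\<Sum>l<N. \<Sum>n<N. p n * (E l n * E l i))"
    by (simp add: sum_distrib_right mult.assoc)
  also have "\<dots> = (\<Sum>n<N. p n * (\<Sum>l<N. E l n * E l i))"
    by (subst sum.swap) (simp add: sum_distrib_left)
  also have "\<dots> = (\<Sum>n<N. p n * (if n = i then 1 else 0))"
    using compl i by (intro sum.cong refl) auto
  also have "\<dots> = p i" using i by (simp add: if_distrib sum.delta cong: if_cong)
  finally show ?thesis .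
qed

lemma parseval_row:
  fixes p :: "nat \<Rightarrow> real" and E :: "nat \<Rightarrow> nat \<Rightarrow> real"
  assumes compl: "\<And>i n. i<N \<Longrightarrow> n<N \<Longrightarrow> (\<Sum>l<N. E l i * E l n) = (if i=n then 1 else 0)"
  shows "(\<Sum>l<N. (\<Sum>n<N. p n * E l n)\<^sup>2) = (\<Sum>n<N. (p n)\<^sup>2)"
proof -
  have "(\<Sum>l<N. (\<Sum>n<N. p n * E l n)\<^sup>2) = (\<Sum>l<N. \<Sum>n<N. p n * ((\<Sum>n<N. p n * E l n) * E l n))"
    by (simp add: power2_eq_square sum_distrib_left sum_distrib_right mult_ac)
  also have "\<dots> = (\<Sum>n<N. p n * (\<Sum>l<N. (\<Sum>n<N. p n * E l n) * E l n))"
    by (subst sum.swap) (simp add: sum_distrib_left)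
  also have "\<dots> = (\<Sum>n<N. p n * p n)"
    using expand_row[OF compl] by (intro sum.cong refl) auto
  finally show ?thesis by (simp add: power2_eq_square)
qed

lemma quad_row:
  fixes p :: "nat \<Rightarrow> real" and E :: "nat \<Rightarrow> nat \<Rightarrow> real" and A :: "nat \<Rightarrow> nat \<Rightarrow> real"
  assumes compl: "\<And>i n. i<N \<Longrightarrow> n<N \<Longrightarrow> (\<Sum>l<N. E l i * E l n) = (if i=n then 1 else 0)"
    and eig: "\<And>l i. l<N \<Longrightarrow> i<N \<Longrightarrow> (\<Sum>j<N. A i j * E l j) = \<mu> l * E l i"
  shows "(\<Sum>i<N. \<Sum>j<N. p i * A i j * p j) = (\<Sum>l<N. \<mu> l * (\<Sum>n<N. p n * E l n)\<^sup>2)"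
proof -
  define c where "c l = (\<Sum>n<N. p n * E l n)" for l
  have pe: "\<And>j. j < N \<Longrightarrow> p j = (\<Sum>l<N. c l * E l j)"
    using expand_row[OF compl] unfolding c_def by auto
  have "\<And>i. i < N \<Longrightarrow> (\<Sum>j<N. A i j * p j) = (\<Sum>l<N. c l * (\<mu> l * E l i))"
  proof -
    fix i assume i: "i < N"
    have "(\<Sum>j<N. A i j * p j) = (\<Sum>j<N. A i j * (\<Sum>l<N. c l * E l j))"
      using pe by (intro sum.cong refl) auto
    also have "\<dots> = (\<Sum>l<N. c l * (\<Sum>j<N. A i j * E l j))"
      by (simp add: sum_distrib_left mult_ac) (subst sum.swap, simp)
    also have "\<dots> = (\<Sum>l<N. c l * (\<mu> l * E l i))"
      using eig i by (intro sum.cong refl) auto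
    finally show "(\<Sum>j<N. A i j * p j) = (\<Sum>l<N. c l * (\<mu> l * E l i))" .
  qed
  note hh = this
  have "(\<Sum>i<N. \<Sum>j<N. p i * A i j * p j) = (\<Sum>i<N. p i * (\<Sum>j<N. A i j * p j))"
    by (simp add: sum_distrib_left mult.assoc)
  also have "\<dots> = (\<Sum>i<N. p i * (\<Sum>l<N. c l * (\<mu> l * E l i)))"
    using hh by simp
  also have "\<dots> = (\<Sum>l<N. c l * \<mu> l * (\<Sum>i<N. p i * E l i))"
    by (simp add: sum_distrib_left mult_ac) (subst sum.swap, simp)
  also have "\<dots> = (\<Sum>l<N. \<mu> l * (c l)\<^sup>2)"
    by (simp add: c_def power2_eq_square mult_ac)
  finally show ?thesis by (simp add: c_def)
qed

lemma bessel:
  fixes u :: "nat \<Rightarrow> nat \<Rightarrow> real" and v :: "nat \<Rightarrow> real"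
  assumes orth: "\<And>m m'. m<R \<Longrightarrow> m'<R \<Longrightarrow> (\<Sum>n<N. u m n * u m' n) = (if m=m' then 1 else 0)"
    and v1: "(\<Sum>n<N. (v n)\<^sup>2) = 1"
  shows "(\<Sum>m<R. (\<Sum>n<N. u m n * v n)\<^sup>2) \<le> 1"
proof -
  define g where "g m = (\<Sum>n<N. u m n * v n)" for m
  define p where "p n = (\<Sum>m<R. g m * u m n)" for n
  have a: "(\<Sum>n<N. v n * p n) = (\<Sum>m<R. (g m)\<^sup>2)"
  proof -
    have "(\<Sum>n<N. v n * p n) = (\<Sum>n<N. \<Sum>m<R. g m * (u m n * v n))"
      by (simp add: p_def sum_distrib_left mult_ac)
    also have "\<dots> = (\<Sum>m<R. g m * g m)"
      by (subst sum.swap) (simp add: g_def sum_distrib_left)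
    finally show ?thesis by (simp add: power2_eq_square)
  qed
  have pu: "\<And>m. m < R \<Longrightarrow> (\<Sum>n<N. p n * u m n) = g m"
  proof -
    fix m assume m: "m < R"
    have "(\<Sum>n<N. p n * u m n) = (\<Sum>n<N. \<Sum>m'<R. g m' * (u m' n * u m n))"
      by (unfold p_def sum_distrib_right mult.assoc) (rule refl)
    also have "\<dots> = (\<Sum>m'<R. g m' * (\<Sum>n<N. u m' n * u m n))"
      by (subst sum.swap) (simp add: sum_distrib_left)
    also have "\<dots> = (\<Sum>m'<R. g m' * (if m' = m then 1 else 0))"
      using orth m by (intro sum.cong refl) auto
    also have "\<dots> = g m" using m by (simp add: if_distrib sum.delta cong: if_cong)
    finally show "(\<Sum>n<N. p n * u m n) = g m" .
  qed
  have b: "(\<Sum>n<N. (p n)\<^sup>2) = (\<Sum>m<R. (g m)\<^sup>2)"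
  proof -
    have "(\<Sum>n<N. (p n)\<^sup>2) = (\<Sum>n<N. \<Sum>m<R. g m * (p n * u m n))"
      by (simp add: power2_eq_square p_def[of n for n] sum_distrib_left mult_ac)
    also have "\<dots> = (\<Sum>m<R. g m * (\<Sum>n<N. p n * u m n))"
      by (subst sum.swap) (simp add: sum_distrib_left)
    also have "\<dots> = (\<Sum>m<R. g m * g m)"
      using pu by (intro sum.cong refl) auto
    finally show ?thesis by (simp add: power2_eq_square)
  qed
  have "0 \<le> (\<Sum>n<N. (v n - p n)\<^sup>2)" by (intro sum_nonneg) auto
  also have "\<dots> = (\<Sum>n<N. (v n)\<^sup>2) - 2 * (\<Sum>n<N. v n * p n) + (\<Sum>n<N. (p n)\<^sup>2)"
    by (simp add: power2_diff sum.distrib sum_subtractf sum_distrib_left mult_ac)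
  finally show ?thesis using a b v1 by (simp add: g_def)
qed

lemma rearr_upper:
  fixes \<mu> d :: "nat \<Rightarrow> real"
  assumes R: "0 < R" "R \<le> N"
    and d: "\<And>l. l < N \<Longrightarrow> 0 \<le> d l \<and> d l \<le> B"
    and ds: "(\<Sum>l<N. d l) = R * B"
    and mono: "\<And>i j. i \<le> j \<Longrightarrow> j < N \<Longrightarrow> \<mu> j \<le> \<mu> i"
  shows "(\<Sum>l<N. \<mu> l * d l) \<le> B * (\<Sum>l<R. \<mu> l)"
proof -
  define t where "t = \<mu> (R - 1)"
  have hds: "(\<Sum>l<N. t * d l) = t * (R * B)" by (simp add: sum_distrib_left[symmetric] ds)
  have "(\<Sum>l<N. \<mu> l * d l) = (\<Sum>l<N. (\<mu> l - t) * d l) + t * (R * B)"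
    using hds by (simp add: algebra_simps sum_subtractf)
  also have "(\<Sum>l<N. (\<mu> l - t) * d l) \<le> (\<Sum>l<N. if l \<in> {..<R} then (\<mu> l - t) * B else 0)"
  proof (rule sum_mono)
    fix l assume l: "l \<in> {..<N}"
    show "(\<mu> l - t) * d l \<le> (if l \<in> {..<R} then (\<mu> l - t) * B else 0)"
    proof (cases "l < R")
      case True
      then have "\<mu> l - t \<ge> 0" using mono[of l "R - 1"] R unfolding t_def by auto
      then show ?thesis using True d[of l] l by (auto intro: mult_left_mono)
    next
      case False
      then have "\<mu> l - t \<le> 0" using mono[of "R - 1" l] R l unfolding t_def by auto
      then show ?thesis using False d[of l] l by (auto intro: mult_nonpos_nonneg)
    qed
  qed
  also have "(\<Sum>l<N. if l \<in> {..<R} then (\<mu> l - t) * B else 0) = (\<Sum>l\<in>{..<N} \<inter> {..<R}. (\<mu> l - t) * B)"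
    by (rule sum.inter_restrict[symmetric]) auto
  also have "{..<N} \<inter> {..<R} = {..<R}" using R by auto
  finally show ?thesis by (simp add: algebra_simps sum_subtractf sum_distrib_left sum_distrib_right)
qed

lemma rearr_lower:
  fixes \<mu> d :: "nat \<Rightarrow> real"
  assumes R: "0 < R" "R \<le> N"
    and d: "\<And>l. l < N \<Longrightarrow> 0 \<le> d l \<and> d l \<le> B"
    and ds: "(\<Sum>l<N. d l) = R * B"
    and mono: "\<And>i j. i \<le> j \<Longrightarrow> j < N \<Longrightarrow> \<mu> j \<le> \<mu> i"
  shows "B * (\<Sum>l\<in>{N-R..<N}. \<mu> l) \<le> (\<Sum>l<N. \<mu> l * d l)"
proof -
  define t where "t = \<mu> (N - R)"
  have hds: "(\<Sum>l<N. t * d l) = t * (R * B)" by (simp add: sum_distrib_left[symmetric] ds)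
  have cR: "card {N-R..<N} = R" using R by simp
  have "B * (\<Sum>l\<in>{N-R..<N}. \<mu> l) = (\<Sum>l\<in>{..<N} \<inter> {N-R..<N}. (\<mu> l - t) * B) + t * (R * B)"
  proof -
    have "{..<N} \<inter> {N-R..<N} = {N-R..<N}" by auto
    then show ?thesis using cR
      by (simp add: algebra_simps sum_subtractf sum_distrib_left sum_distrib_right)
  qed
  also have "(\<Sum>l\<in>{..<N} \<inter> {N-R..<N}. (\<mu> l - t) * B) = (\<Sum>l<N. if l \<in> {N-R..<N} then (\<mu> l - t) * B else 0)"
    by (rule sum.inter_restrict) auto
  also have "\<dots> \<le> (\<Sum>l<N. (\<mu> l - t) * d l)"
  proof (rule sum_mono)
    fix l assume l: "l \<in> {..<N}"
    show "(if l \<in> {N-R..<N} then (\<mu> l - t) * B else 0) \<le> (\<mu> l - t) * d l"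
    proof (cases "l \<ge> N - R")
      case True
      then have "\<mu> l - t \<le> 0" using mono[of "N - R" l] R l unfolding t_def by auto
      then show ?thesis using True d[of l] l by (auto intro: mult_left_mono_neg)
    next
      case False
      then have "\<mu> l - t \<ge> 0" using mono[of l "N - R"] R unfolding t_def by auto
      then show ?thesis using False d[of l] l by auto
    qed
  qed
  also have "(\<Sum>l<N. (\<mu> l - t) * d l) + t * (R * B) = (\<Sum>l<N. \<mu> l * d l)"
    using hds by (simp add: algebra_simps sum_subtractf)
  finally show ?thesis by simp
qed



lemma sq_expand:
  fixes p :: "nat \<Rightarrow> real" and h :: "nat \<Rightarrow> nat \<Rightarrow> real"
  shows "(\<Sum>k<K. (\<Sum>n<N. p n * h n k)\<^sup>2) = (\<Sum>i<N. \<Sum>j<N. p i * (\<Sum>k<K. h i k * h j k) * p j)"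
proof -
  have "(\<Sum>k<K. (\<Sum>n<N. p n * h n k)\<^sup>2) = (\<Sum>k<K. \<Sum>i<N. \<Sum>j<N. p i * h i k * (p j * h j k))"
    by (simp add: power2_eq_square sum_product)
  also have "\<dots> = (\<Sum>i<N. \<Sum>k<K. \<Sum>j<N. p i * h i k * (p j * h j k))"
    by (rule sum.swap)
  also have "\<dots> = (\<Sum>i<N. \<Sum>j<N. \<Sum>k<K. p i * h i k * (p j * h j k))"
    by (rule sum.cong[OF refl], rule sum.swap[where A="{..<K}" and B="{..<N}"])
  also have "\<dots> = (\<Sum>i<N. \<Sum>j<N. p i * (\<Sum>k<K. h i k * h j k) * p j)"
    by (rule sum.cong[OF refl], rule sum.cong[OF refl]) (simp add: sum_distrib_left sum_distrib_right mult_ac)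
  finally show ?thesis .
qed

lemma swap_in:
  fixes a :: "'q \<Rightarrow> real"
  shows "(\<Sum>q\<in>A. a q * (\<Sum>i\<in>B. f q i)) = (\<Sum>i\<in>B. \<Sum>q\<in>A. a q * f q i)"
  by (simp add: sum_distrib_left) (rule sum.swap)

lemma HHt_entry:
  assumes "Hq \<in> carrier_mat N K" "i < N" "j < N"
  shows "(Hq * transpose_mat Hq) $$ (i, j) = (\<Sum>k<K. Hq $$ (i,k) * Hq $$ (j,k))"
  using assms by (simp add: scalar_prod_def atLeast0LessThan)

lemma energy_formula:
  fixes H :: "nat \<Rightarrow> real mat" and \<Phi> :: "real mat"
  assumes Heq: "Heq = mat N N (\<lambda>(i, j). \<Sum>q<Q. \<pi> q * (H q * transpose_mat (H q)) $$ (i, j))"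
    and H_dim: "\<And>q. q < Q \<Longrightarrow> H q \<in> carrier_mat N (K q)"
    and \<pi>_sum: "(\<Sum>q<Q. \<pi> q) = 1"
    and sx: "\<sigma>x > 0" and s0: "\<sigma>0 > 0"
    and P: "\<Phi> \<in> carrier_mat R N"
  shows "expected_energy \<sigma>x \<sigma>0 Q \<pi> H N \<Phi> =
    \<sigma>x\<^sup>2 * (\<Sum>m<R. \<Sum>i<N. \<Sum>j<N. \<Phi> $$ (m,i) * Heq $$ (i,j) * \<Phi> $$ (m,j))
    + \<sigma>0\<^sup>2 * (\<Sum>m<R. \<Sum>n<N. (\<Phi> $$ (m,n))\<^sup>2)"
proof -
  define S where "S = (\<Sum>m<R. \<Sum>n<N. (\<Phi> $$ (m,n))\<^sup>2)"
  define G where "G q i j = (\<Sum>k<K q. H q $$ (i,k) * H q $$ (j,k))" for q i j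
  have dr: "dim_row \<Phi> = R" using P by auto
  have "expected_energy \<sigma>x \<sigma>0 Q \<pi> H N \<Phi> =
     (\<Sum>q<Q. \<pi> q * (\<Sum>m<R. \<sigma>x\<^sup>2 * (\<Sum>k<K q. (\<Sum>n<N. \<Phi> $$ (m,n) * H q $$ (n,k))\<^sup>2) + \<sigma>0\<^sup>2 * (\<Sum>n<N. (\<Phi> $$ (m,n))\<^sup>2)))"
    unfolding expected_energy_def dr
  proof (intro sum.cong refl arg_cong2[where f="(*)"])
    fix q assume q: "q \<in> {..<Q}"
    then have dc: "dim_col (H q) = K q" using H_dim by auto
    show "(\<integral>x. (\<integral>w. out_energy \<Phi> (H q) N x w \<partial>w_law \<sigma>0 R N) \<partial>x_law \<sigma>x (dim_col (H q))) =
      (\<Sum>m<R. \<sigma>x\<^sup>2 * (\<Sum>k<K q. (\<Sum>n<N. \<Phi> $$ (m,n) * H q $$ (n,k))\<^sup>2) + \<sigma>0\<^sup>2 * (\<Sum>n<N. (\<Phi> $$ (m,n))\<^sup>2))"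
      unfolding dc using energy_q[OF P H_dim sx s0] q by auto
  qed
  also have "\<dots> = (\<Sum>q<Q. \<pi> q * (\<sigma>x\<^sup>2 * (\<Sum>m<R. \<Sum>i<N. \<Sum>j<N. \<Phi> $$ (m,i) * G q i j * \<Phi> $$ (m,j)) + \<sigma>0\<^sup>2 * S))"
    by (simp add: S_def G_def sum.distrib sum_distrib_left sq_expand)
  also have "\<dots> = \<sigma>x\<^sup>2 * (\<Sum>q<Q. \<pi> q * (\<Sum>m<R. \<Sum>i<N. \<Sum>j<N. \<Phi> $$ (m,i) * G q i j * \<Phi> $$ (m,j)))
       + \<sigma>0\<^sup>2 * S * (\<Sum>q<Q. \<pi> q)"
    by (simp add: algebra_simps sum.distrib sum_distrib_left sum_distrib_right)
  also have "(\<Sum>q<Q. \<pi> q * (\<Sum>m<R. \<Sum>i<N. \<Sum>j<N. \<Phi> $$ (m,i) * G q i j * \<Phi> $$ (m,j)))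
     = (\<Sum>m<R. \<Sum>i<N. \<Sum>j<N. \<Sum>q<Q. \<pi> q * (\<Phi> $$ (m,i) * G q i j * \<Phi> $$ (m,j)))"
    by (simp only: swap_in)
  also have "\<dots> = (\<Sum>m<R. \<Sum>i<N. \<Sum>j<N. \<Phi> $$ (m,i) * Heq $$ (i,j) * \<Phi> $$ (m,j))"
  proof (intro sum.cong refl)
    fix m i j assume i: "i \<in> {..<N}" and j: "j \<in> {..<N}"
    have "Heq $$ (i,j) = (\<Sum>q<Q. \<pi> q * G q i j)"
      using i j by (simp add: Heq G_def) (intro sum.cong refl, simp add: HHt_entry[OF H_dim])
    then show "(\<Sum>q<Q. \<pi> q * (\<Phi> $$ (m,i) * G q i j * \<Phi> $$ (m,j))) = \<Phi> $$ (m,i) * Heq $$ (i,j) * \<Phi> $$ (m,j)"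
      by (simp add: sum_distrib_left sum_distrib_right mult_ac)
  qed
  finally show ?thesis using \<pi>_sum by (simp add: S_def)
qed



lemma orth_entries:
  fixes \<Phi> :: "real mat"
  assumes P: "\<Phi> \<in> carrier_mat R N" and orth: "real M \<cdot>\<^sub>m (\<Phi> * transpose_mat \<Phi>) = 1\<^sub>m R"
    and Mpos: "M > 0" and m: "m < R" and m': "m' < R"
  shows "(\<Sum>n<N. \<Phi> $$ (m,n) * \<Phi> $$ (m',n)) = (if m = m' then 1 / real M else 0)"
proof -
  have "(real M \<cdot>\<^sub>m (\<Phi> * transpose_mat \<Phi>)) $$ (m,m') = real M * (\<Sum>n<N. \<Phi> $$ (m,n) * \<Phi> $$ (m',n))"
    using P m m' by (simp add: scalar_prod_def atLeast0LessThan)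
  then have "real M * (\<Sum>n<N. \<Phi> $$ (m,n) * \<Phi> $$ (m',n)) = (if m = m' then 1 else 0)"
    using orth m m' by simp
  then show ?thesis using Mpos by (auto simp: field_simps)
qed

lemma general:
  fixes H :: "nat \<Rightarrow> real mat" and \<Phi> :: "real mat" and e :: "nat \<Rightarrow> real vec"
  assumes Heq: "Heq = mat N N (\<lambda>(i, j). \<Sum>q<Q. \<pi> q * (H q * transpose_mat (H q)) $$ (i, j))"
    and H_dim: "\<And>q. q < Q \<Longrightarrow> H q \<in> carrier_mat N (K q)"
    and \<pi>_sum: "(\<Sum>q<Q. \<pi> q) = 1"
    and sx: "\<sigma>x > 0" and s0: "\<sigma>0 > 0"
    and compl: "\<And>i n. i<N \<Longrightarrow> n<N \<Longrightarrow> (\<Sum>l<N. e l $ i * e l $ n) = (if i=n then 1 else 0)"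
    and eig: "\<And>l i. l<N \<Longrightarrow> i<N \<Longrightarrow> (\<Sum>j<N. Heq $$ (i,j) * e l $ j) = \<mu> l * e l $ i"
    and unit: "\<And>l. l<N \<Longrightarrow> (\<Sum>n<N. (e l $ n)\<^sup>2) = 1"
    and Mpos: "M > 0"
    and P: "\<Phi> \<in> carrier_mat R N" and orth: "real M \<cdot>\<^sub>m (\<Phi> * transpose_mat \<Phi>) = 1\<^sub>m R"
  shows "expected_energy \<sigma>x \<sigma>0 Q \<pi> H N \<Phi> =
           \<sigma>x\<^sup>2 * (\<Sum>l<N. \<mu> l * (\<Sum>m<R. (\<Sum>n<N. \<Phi> $$ (m,n) * e l $ n)\<^sup>2)) + \<sigma>0\<^sup>2 * (R / M)"
    and "\<And>l. l < N \<Longrightarrow> 0 \<le> (\<Sum>m<R. (\<Sum>n<N. \<Phi> $$ (m,n) * e l $ n)\<^sup>2) \<and>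
                        (\<Sum>m<R. (\<Sum>n<N. \<Phi> $$ (m,n) * e l $ n)\<^sup>2) \<le> 1 / M"
    and "(\<Sum>l<N. \<Sum>m<R. (\<Sum>n<N. \<Phi> $$ (m,n) * e l $ n)\<^sup>2) = R * (1 / M)"
proof -
  have oe: "\<And>m m'. m < R \<Longrightarrow> m' < R \<Longrightarrow> (\<Sum>n<N. \<Phi> $$ (m,n) * \<Phi> $$ (m',n)) = (if m = m' then 1 / real M else 0)"
    using orth_entries[OF P orth Mpos] by blast
  have S: "(\<Sum>m<R. \<Sum>n<N. (\<Phi> $$ (m,n))\<^sup>2) = R / M"
  proof -
    have "(\<Sum>m<R. \<Sum>n<N. (\<Phi> $$ (m,n))\<^sup>2) = (\<Sum>m<R. 1 / real M)"
      using oe by (intro sum.cong refl) (simp add: power2_eq_square)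
    then show ?thesis by simp
  qed
  have Q: "(\<Sum>m<R. \<Sum>i<N. \<Sum>j<N. \<Phi> $$ (m,i) * Heq $$ (i,j) * \<Phi> $$ (m,j)) =
     (\<Sum>l<N. \<mu> l * (\<Sum>m<R. (\<Sum>n<N. \<Phi> $$ (m,n) * e l $ n)\<^sup>2))"
  proof -
    have "(\<Sum>m<R. \<Sum>i<N. \<Sum>j<N. \<Phi> $$ (m,i) * Heq $$ (i,j) * \<Phi> $$ (m,j)) =
      (\<Sum>m<R. \<Sum>l<N. \<mu> l * (\<Sum>n<N. \<Phi> $$ (m,n) * e l $ n)\<^sup>2)"
      by (rule sum.cong[OF refl], rule quad_row[where E="\<lambda>l n. e l $ n" and A="\<lambda>i j. Heq $$ (i,j)"])
        (use compl eig in auto)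
    also have "\<dots> = (\<Sum>l<N. \<mu> l * (\<Sum>m<R. (\<Sum>n<N. \<Phi> $$ (m,n) * e l $ n)\<^sup>2))"
      by (subst sum.swap) (simp add: sum_distrib_left)
    finally show ?thesis .
  qed
  show "expected_energy \<sigma>x \<sigma>0 Q \<pi> H N \<Phi> =
           \<sigma>x\<^sup>2 * (\<Sum>l<N. \<mu> l * (\<Sum>m<R. (\<Sum>n<N. \<Phi> $$ (m,n) * e l $ n)\<^sup>2)) + \<sigma>0\<^sup>2 * (R / M)"
    using energy_formula[OF Heq H_dim \<pi>_sum sx s0 P] by (simp only: Q S)
  show "(\<Sum>l<N. \<Sum>m<R. (\<Sum>n<N. \<Phi> $$ (m,n) * e l $ n)\<^sup>2) = R * (1 / M)"
  proof -
    have "(\<Sum>l<N. \<Sum>m<R. (\<Sum>n<N. \<Phi> $$ (m,n) * e l $ n)\<^sup>2) = (\<Sum>m<R. \<Sum>l<N. (\<Sum>n<N. \<Phi> $$ (m,n) * e l $ n)\<^sup>2)"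
      by (rule sum.swap)
    also have "\<dots> = (\<Sum>m<R. \<Sum>n<N. (\<Phi> $$ (m,n))\<^sup>2)"
      by (rule sum.cong[OF refl], rule parseval_row[where E="\<lambda>l n. e l $ n"]) (use compl in auto)
    finally show ?thesis using S by simp
  qed
  fix l assume l: "l < N"
  have b: "(\<Sum>m<R. (\<Sum>n<N. (sqrt M * \<Phi> $$ (m,n)) * e l $ n)\<^sup>2) \<le> 1"
  proof (rule bessel)
    fix m m' assume "m < R" "m' < R"
    then show "(\<Sum>n<N. (sqrt M * \<Phi> $$ (m,n)) * (sqrt M * \<Phi> $$ (m',n))) = (if m = m' then 1 else 0)"
      using oe[of m m'] Mpos by (simp add: sum_distrib_left[symmetric] mult_ac)
  next
    show "(\<Sum>n<N. (e l $ n)\<^sup>2) = 1" using unit l by auto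
  qed
  have "(\<Sum>m<R. (\<Sum>n<N. (sqrt M * \<Phi> $$ (m,n)) * e l $ n)\<^sup>2) = M * (\<Sum>m<R. (\<Sum>n<N. \<Phi> $$ (m,n) * e l $ n)\<^sup>2)"
    by (simp add: sum_distrib_left[symmetric] mult.assoc power_mult_distrib)
  with b Mpos show "0 \<le> (\<Sum>m<R. (\<Sum>n<N. \<Phi> $$ (m,n) * e l $ n)\<^sup>2) \<and>
                        (\<Sum>m<R. (\<Sum>n<N. \<Phi> $$ (m,n) * e l $ n)\<^sup>2) \<le> 1 / M"
    by (auto simp: sum_nonneg field_simps)
qed

lemma spec:
  fixes e :: "nat \<Rightarrow> real vec" and f :: "nat \<Rightarrow> nat"
  assumes sp: "\<And>l l'. l<N \<Longrightarrow> l'<N \<Longrightarrow> (\<Sum>n<N. e l $ n * e l' $ n) = (if l=l' then 1 else 0)"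
    and f: "\<And>m. m < R \<Longrightarrow> f m < N"
    and inj: "\<And>m m'. m < R \<Longrightarrow> m' < R \<Longrightarrow> f m = f m' \<Longrightarrow> m = m'"
    and Mpos: "M > 0"
    and \<Phi>: "\<Phi> = (1 / sqrt (real M)) \<cdot>\<^sub>m mat R N (\<lambda>(i, n). e (f i) $ n)"
  shows "\<Phi> \<in> carrier_mat R N"
    and "real M \<cdot>\<^sub>m (\<Phi> * transpose_mat \<Phi>) = 1\<^sub>m R"
    and "(\<Sum>l<N. \<mu> l * (\<Sum>m<R. (\<Sum>n<N. \<Phi> $$ (m,n) * e l $ n)\<^sup>2)) = (1 / M) * (\<Sum>m<R. \<mu> (f m))"
proof -
  show "\<Phi> \<in> carrier_mat R N" unfolding \<Phi> by simp
  have sq: "(1 / sqrt (real M)) * (1 / sqrt (real M)) = 1 / real M" using Mpos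
    by (simp add: real_sqrt_mult[symmetric])
  show "real M \<cdot>\<^sub>m (\<Phi> * transpose_mat \<Phi>) = 1\<^sub>m R"
  proof (rule eq_matI)
    fix i j assume i: "i < dim_row (1\<^sub>m R)" and j: "j < dim_col (1\<^sub>m R)"
    have "(real M \<cdot>\<^sub>m (\<Phi> * transpose_mat \<Phi>)) $$ (i,j) =
       real M * (\<Sum>n<N. (1 / sqrt (real M) * e (f i) $ n) * (1 / sqrt (real M) * e (f j) $ n))"
      using i j unfolding \<Phi> by (simp add: scalar_prod_def atLeast0LessThan)
    also have "\<dots> = real M * ((1 / sqrt (real M)) * (1 / sqrt (real M)) * (\<Sum>n<N. e (f i) $ n * e (f j) $ n))"
      by (simp add: sum_distrib_left mult_ac)
    also have "\<dots> = (if f i = f j then 1 else 0)"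
      unfolding sq using sp[of "f i" "f j"] f i j Mpos by simp
    finally have "(real M \<cdot>\<^sub>m (\<Phi> * transpose_mat \<Phi>)) $$ (i,j) = (if f i = f j then 1 else 0)" .
    then show "(real M \<cdot>\<^sub>m (\<Phi> * transpose_mat \<Phi>)) $$ (i,j) = 1\<^sub>m R $$ (i,j)"
      using i j inj[of i j] by auto
  qed (auto simp: \<Phi>)
  have c: "(\<Sum>n<N. \<Phi> $$ (m,n) * e l $ n)\<^sup>2 = (if f m = l then 1 / M else 0)" if "m < R" "l < N" for m l
  proof -
    have "(\<Sum>n<N. \<Phi> $$ (m,n) * e l $ n) = (1 / sqrt (real M)) * (\<Sum>n<N. e (f m) $ n * e l $ n)"
      using that unfolding \<Phi> by (simp add: sum_distrib_left mult_ac)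
    also have "\<dots> = (if f m = l then 1 / sqrt (real M) else 0)"
      using sp[of "f m" l] f that by simp
    finally show ?thesis using Mpos by (simp add: power_divide)
  qed
  have "(\<Sum>l<N. \<mu> l * (\<Sum>m<R. (\<Sum>n<N. \<Phi> $$ (m,n) * e l $ n)\<^sup>2)) =
        (\<Sum>l<N. \<Sum>m<R. \<mu> l * (if f m = l then 1 / M else 0))"
    using c by (simp add: sum_distrib_left)
  also have "\<dots> = (\<Sum>m<R. \<Sum>l<N. \<mu> l * (if f m = l then 1 / M else 0))"
    by (rule sum.swap)
  also have "\<dots> = (\<Sum>m<R. \<mu> (f m) / M)"
    using f by (intro sum.cong refl) (simp add: if_distrib sum.delta' cong: if_cong)
  finally show "(\<Sum>l<N. \<mu> l * (\<Sum>m<R. (\<Sum>n<N. \<Phi> $$ (m,n) * e l $ n)\<^sup>2)) = (1 / M) * (\<Sum>m<R. \<mu> (f m))"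
    by (simp add: sum_divide_distrib)
qed



theorem theorem5:
  fixes Q N M1 M2 :: nat
    and K :: "nat \<Rightarrow> nat"
    and H :: "nat \<Rightarrow> real mat"
    and \<pi> :: "nat \<Rightarrow> real"
    and \<sigma>x \<sigma>0 :: real
    and e :: "nat \<Rightarrow> real vec"
    and \<mu> :: "nat \<Rightarrow> real"
  defines "Heq \<equiv> mat N N (\<lambda>(i, j). \<Sum>q<Q. \<pi> q * (H q * transpose_mat (H q)) $$ (i, j))"
  defines "M \<equiv> M1 + M2"
  defines "\<Phi>s \<equiv> (1 / sqrt (real M)) \<cdot>\<^sub>m mat M1 N (\<lambda>(i, n). e i $ n)"
  defines "\<Phi>o \<equiv> (1 / sqrt (real M)) \<cdot>\<^sub>m mat M2 N (\<lambda>(i, n). e (N - M2 + i) $ n)"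
  assumes H_dim: "\<And>q. q < Q \<Longrightarrow> H q \<in> carrier_mat N (K q)"
    and H_rank: "\<And>q. q < Q \<Longrightarrow> full_col_rank (H q)"
    and \<pi>_nonneg: "\<And>q. q < Q \<Longrightarrow> \<pi> q \<ge> 0"
    and \<pi>_sum: "(\<Sum>q<Q. \<pi> q) = 1"
    and \<sigma>x_pos: "\<sigma>x > 0" and \<sigma>0_pos: "\<sigma>0 > 0"
    and e_dim: "\<And>i. i < N \<Longrightarrow> e i \<in> carrier_vec N"
    and e_orthonormal: "\<And>i j. i < N \<Longrightarrow> j < N \<Longrightarrow> e i \<bullet> e j = (if i = j then 1 else 0)"
    and e_eigen: "\<And>i. i < N \<Longrightarrow> Heq *\<^sub>v e i = \<mu> i \<cdot>\<^sub>v e i"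
    and \<mu>_sorted: "\<And>i j. i \<le> j \<Longrightarrow> j < N \<Longrightarrow> \<mu> j \<le> \<mu> i"
    and M1_pos: "M1 > 0" and M2_pos: "M2 > 0"
    and M_le: "M \<le> N"
  shows "\<Phi>s \<in> carrier_mat M1 N
         \<and> real M \<cdot>\<^sub>m (\<Phi>s * transpose_mat \<Phi>s) = 1\<^sub>m M1
         \<and> (\<forall>\<Phi> \<in> carrier_mat M1 N. real M \<cdot>\<^sub>m (\<Phi> * transpose_mat \<Phi>) = 1\<^sub>m M1 \<longrightarrow>
               expected_energy \<sigma>x \<sigma>0 Q \<pi> H N \<Phi> \<le> expected_energy \<sigma>x \<sigma>0 Q \<pi> H N \<Phi>s)
         \<and> \<Phi>o \<in> carrier_mat M2 N
         \<and> real M \<cdot>\<^sub>m (\<Phi>o * transpose_mat \<Phi>o) = 1\<^sub>m M2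
         \<and> (\<forall>\<Phi> \<in> carrier_mat M2 N. real M \<cdot>\<^sub>m (\<Phi> * transpose_mat \<Phi>) = 1\<^sub>m M2 \<longrightarrow>
               expected_energy \<sigma>x \<sigma>0 Q \<pi> H N \<Phi>o \<le> expected_energy \<sigma>x \<sigma>0 Q \<pi> H N \<Phi>)"
proof -
  have Mpos: "M > 0" using M1_pos unfolding M_def by simp
  have HeqE: "Heq = mat N N (\<lambda>(i, j). \<Sum>q<Q. \<pi> q * (H q * transpose_mat (H q)) $$ (i, j))"
    unfolding Heq_def ..
  have sp: "(\<Sum>n<N. e l $ n * e l' $ n) = (if l=l' then 1 else 0)" if "l < N" "l' < N" for l l'
  proof -
    have "e l \<bullet> e l' = (\<Sum>n<N. e l $ n * e l' $ n)"
      using e_dim[OF that(2)] by (simp add: scalar_prod_def atLeast0LessThan)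
    then show ?thesis using e_orthonormal[OF that] by simp
  qed
  have unit: "(\<Sum>n<N. (e l $ n)\<^sup>2) = 1" if "l < N" for l
    using sp[OF that that] by (simp add: power2_eq_square)
  define Em where "Em = mat N N (\<lambda>(l,n). e l $ n)"
  have Emc: "Em \<in> carrier_mat N N" and EmT: "transpose_mat Em \<in> carrier_mat N N"
    by (simp_all add: Em_def)
  have "Em * transpose_mat Em = 1\<^sub>m N"
    by (rule eq_matI) (auto simp: Em_def scalar_prod_def atLeast0LessThan sp)
  then have TE: "transpose_mat Em * Em = 1\<^sub>m N"
    by (rule mat_mult_left_right_inverse[OF Emc EmT])
  have compl: "(\<Sum>l<N. e l $ i * e l $ n) = (if i=n then 1 else 0)" if "i < N" "n < N" for i n
  proof -
    have "(transpose_mat Em * Em) $$ (i,n) = (\<Sum>l<N. e l $ i * e l $ n)"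
      using that by (simp add: Em_def scalar_prod_def atLeast0LessThan)
    then show ?thesis using TE that by simp
  qed
  have dH: "dim_row Heq = N" "dim_col Heq = N" by (simp_all add: Heq_def)
  have eig: "(\<Sum>j<N. Heq $$ (i,j) * e l $ j) = \<mu> l * e l $ i" if "l < N" "i < N" for l i
  proof -
    have "(Heq *\<^sub>v e l) $ i = (\<Sum>j<N. Heq $$ (i,j) * e l $ j)"
      using that e_dim[OF that(1)] dH by (simp add: scalar_prod_def atLeast0LessThan)
    moreover have "(\<mu> l \<cdot>\<^sub>v e l) $ i = \<mu> l * e l $ i"
      using that e_dim[OF that(1)] by simp
    ultimately show ?thesis using e_eigen[OF that(1)] by simp
  qed
  have G1: "expected_energy \<sigma>x \<sigma>0 Q \<pi> H N \<Phi> =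
           \<sigma>x\<^sup>2 * (\<Sum>l<N. \<mu> l * (\<Sum>m<R. (\<Sum>n<N. \<Phi> $$ (m,n) * e l $ n)\<^sup>2)) + \<sigma>0\<^sup>2 * (R / M)"
    if P: "\<Phi> \<in> carrier_mat R N" and O: "real M \<cdot>\<^sub>m (\<Phi> * transpose_mat \<Phi>) = 1\<^sub>m R" for \<Phi> R
    by (rule general(1)[OF HeqE _ \<pi>_sum \<sigma>x_pos \<sigma>0_pos _ _ _ Mpos P O]) (fact H_dim compl eig unit)+
  have G2: "0 \<le> (\<Sum>m<R. (\<Sum>n<N. \<Phi> $$ (m,n) * e l $ n)\<^sup>2) \<and>
                        (\<Sum>m<R. (\<Sum>n<N. \<Phi> $$ (m,n) * e l $ n)\<^sup>2) \<le> 1 / M"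
    if P: "\<Phi> \<in> carrier_mat R N" and O: "real M \<cdot>\<^sub>m (\<Phi> * transpose_mat \<Phi>) = 1\<^sub>m R" and l: "l < N" for \<Phi> R l
    by (rule general(2)[OF HeqE _ \<pi>_sum \<sigma>x_pos \<sigma>0_pos _ _ _ Mpos P O l]) (fact H_dim compl eig unit)+
  have G3: "(\<Sum>l<N. \<Sum>m<R. (\<Sum>n<N. \<Phi> $$ (m,n) * e l $ n)\<^sup>2) = R * (1 / M)"
    if P: "\<Phi> \<in> carrier_mat R N" and O: "real M \<cdot>\<^sub>m (\<Phi> * transpose_mat \<Phi>) = 1\<^sub>m R" for \<Phi> R
    by (rule general(3)[OF HeqE _ \<pi>_sum \<sigma>x_pos \<sigma>0_pos _ _ _ Mpos P O]) (fact H_dim compl eig unit)+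
  have M1N: "M1 \<le> N" and M2N: "M2 \<le> N" using M_le unfolding M_def by auto
  have fS: "\<And>m. m < M1 \<Longrightarrow> m < N" using M1N by auto
  have iS: "\<And>m m'. m < M1 \<Longrightarrow> m' < M1 \<Longrightarrow> m = m' \<Longrightarrow> m = m'" by auto
  have dS: "\<Phi>s = (1 / sqrt (real M)) \<cdot>\<^sub>m mat M1 N (\<lambda>(i, n). e i $ n)" unfolding \<Phi>s_def ..
  note Ss = spec[where R=M1 and f="\<lambda>i. i" and M=M and \<Phi>=\<Phi>s, OF sp fS iS Mpos dS]
  have Ss1: "\<Phi>s \<in> carrier_mat M1 N" by (rule Ss(1))
  have Ss2: "real M \<cdot>\<^sub>m (\<Phi>s * transpose_mat \<Phi>s) = 1\<^sub>m M1" by (rule Ss(2))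
  have Ss3: "(\<Sum>l<N. \<mu> l * (\<Sum>m<M1. (\<Sum>n<N. \<Phi>s $$ (m,n) * e l $ n)\<^sup>2)) = (1 / M) * (\<Sum>m<M1. \<mu> m)"
    by (rule Ss(3))
  have fO: "\<And>m. m < M2 \<Longrightarrow> N - M2 + m < N" using M2N by auto
  have iO: "\<And>m m'. m < M2 \<Longrightarrow> m' < M2 \<Longrightarrow> N - M2 + m = N - M2 + m' \<Longrightarrow> m = m'" by auto
  have dO: "\<Phi>o = (1 / sqrt (real M)) \<cdot>\<^sub>m mat M2 N (\<lambda>(i, n). e (N - M2 + i) $ n)" unfolding \<Phi>o_def ..
  note So = spec[where R=M2 and f="\<lambda>i. N - M2 + i" and M=M and \<Phi>=\<Phi>o, OF sp fO iO Mpos dO]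
  have So1: "\<Phi>o \<in> carrier_mat M2 N" by (rule So(1))
  have So2: "real M \<cdot>\<^sub>m (\<Phi>o * transpose_mat \<Phi>o) = 1\<^sub>m M2" by (rule So(2))
  have So3: "(\<Sum>l<N. \<mu> l * (\<Sum>m<M2. (\<Sum>n<N. \<Phi>o $$ (m,n) * e l $ n)\<^sup>2)) = (1 / M) * (\<Sum>m<M2. \<mu> (N - M2 + m))"
    by (rule So(3))
  have sx2: "\<sigma>x\<^sup>2 \<ge> 0" by simp
  have part1: "expected_energy \<sigma>x \<sigma>0 Q \<pi> H N \<Phi> \<le> expected_energy \<sigma>x \<sigma>0 Q \<pi> H N \<Phi>s"
    if P: "\<Phi> \<in> carrier_mat M1 N" and O: "real M \<cdot>\<^sub>m (\<Phi> * transpose_mat \<Phi>) = 1\<^sub>m M1" for \<Phi>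
  proof -
    have "(\<Sum>l<N. \<mu> l * (\<Sum>m<M1. (\<Sum>n<N. \<Phi> $$ (m,n) * e l $ n)\<^sup>2)) \<le> (1 / M) * (\<Sum>l<M1. \<mu> l)"
      by (rule rearr_upper[where B="1 / M"]) (assumption | rule M1_pos M1N G2[OF P O] G3[OF P O] \<mu>_sorted)+
    from mult_left_mono[OF this sx2] show ?thesis
      unfolding G1[OF P O] G1[OF Ss1 Ss2] Ss3 by linarith
  qed
  have shift: "(\<Sum>m<M2. \<mu> (N - M2 + m)) = (\<Sum>l\<in>{N-M2..<N}. \<mu> l)"
  proof -
    have "{N-M2..<N} = (\<lambda>m. N - M2 + m) ` {..<M2}"
    proof
      show "{N - M2..<N} \<subseteq> (\<lambda>m. N - M2 + m) ` {..<M2}"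
      proof
        fix l assume "l \<in> {N - M2..<N}"
        then show "l \<in> (\<lambda>m. N - M2 + m) ` {..<M2}"
          using M2N by (intro image_eqI[of _ _ "l - (N - M2)"]) auto
      qed
    qed (use M2N in auto)
    then show ?thesis by (simp add: sum.reindex inj_on_def)
  qed
  have part2: "expected_energy \<sigma>x \<sigma>0 Q \<pi> H N \<Phi>o \<le> expected_energy \<sigma>x \<sigma>0 Q \<pi> H N \<Phi>"
    if P: "\<Phi> \<in> carrier_mat M2 N" and O: "real M \<cdot>\<^sub>m (\<Phi> * transpose_mat \<Phi>) = 1\<^sub>m M2" for \<Phi>
  proof -
    have "(1 / M) * (\<Sum>l\<in>{N-M2..<N}. \<mu> l) \<le> (\<Sum>l<N. \<mu> l * (\<Sum>m<M2. (\<Sum>n<N. \<Phi> $$ (m,n) * e l $ n)\<^sup>2))"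
      by (rule rearr_lower[where B="1 / M"]) (assumption | rule M2_pos M2N G2[OF P O] G3[OF P O] \<mu>_sorted)+
    from mult_left_mono[OF this sx2] show ?thesis
      unfolding G1[OF P O] G1[OF So1 So2] So3 shift by linarith
  qed
  show ?thesis using Ss1 Ss2 So1 So2 part1 part2 by blast
qed

end
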